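(* Let $G\le\mathrm{Homeo}_+(\mathbb{R})$ be finitely generated. Then every point of $\mathrm{crs}\,G$ lies in $J_1\cup J_2$ for some two-chain $\{J_1,J_2\}$ with $J_1,J_2\in\bigcup_{g\in G}\pi_0\operatorname{supp} g$. In particular, if $U\subseteq\mathbb{R}$ is a $G$-invariant set such that the restricted action $G|_U$ is Conradian, then $U\cap \mathrm{crs}\,G=\varnothing$.
   Context: For $g\in\mathrm{Homeo}_+(\mathbb{R})$, $\operatorname{supp} g=\mathbb{R}\setminus\mathrm{Fix}(g)$, $\operatorname{supp}G=\bigcup_{g\in G}\operatorname{supp} g$, and $\pi_0 X$ denotes the set of connected components of $X$. The crossed support $\mathrm{crs}\,G$ is the union of those components $J\in\pi_0\operatorname{supp} G$ which are not a connected component of $\operatorname{supp} g$ for any $g\in G$. A pair of open intervals $\{J_1,J_2\}$ is a two-chain if $J_1\cap J_2$ is a proper nonempty subinterval of both. For a group acting by order-preserving bijections on an ordered set $\Omega$, $f,g$ are crossed if there exist $u<w<v$ in $\Omega$ with $g^n(u)<w<f^n(v)$ for all $n\in\mathbb{Z}$ and $g^N(v)<w<f^N(u)$ for some $N\in\mathbb{Z}$; the action is Conradian if no two elements are crossed. *)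

theory Defs
  imports "HOL-Analysis.Analysis"
begin

definition homeo_plus :: "(real \<Rightarrow> real) \<Rightarrow> bool" where
  "homeo_plus f \<longleftrightarrow> continuous_on UNIV f \<and> bij f \<and> strict_mono f"

definition homeo_subgroup :: "(real \<Rightarrow> real) set \<Rightarrow> bool" where
  "homeo_subgroup G \<longleftrightarrow> (\<forall>g\<in>G. homeo_plus g) \<and> id \<in> G \<and>
     (\<forall>f\<in>G. \<forall>g\<in>G. f \<circ> g \<in> G) \<and> (\<forall>g\<in>G. inv g \<in> G)"

inductive_set gen_group :: "(real \<Rightarrow> real) set \<Rightarrow> (real \<Rightarrow> real) set"
  for S :: "(real \<Rightarrow> real) set" where
  gen_id: "id \<in> gen_group S"
| gen_gen: "s \<in> S \<Longrightarrow> s \<in> gen_group S"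
| gen_inv: "s \<in> S \<Longrightarrow> inv s \<in> gen_group S"
| gen_comp: "f \<in> gen_group S \<Longrightarrow> g \<in> gen_group S \<Longrightarrow> f \<circ> g \<in> gen_group S"

definition fin_gen :: "(real \<Rightarrow> real) set \<Rightarrow> bool" where
  "fin_gen G \<longleftrightarrow> (\<exists>S. finite S \<and> S \<subseteq> G \<and> G = gen_group S)"

definition supp :: "(real \<Rightarrow> real) \<Rightarrow> real set" where
  "supp g = {x. g x \<noteq> x}"

definition supp_grp :: "(real \<Rightarrow> real) set \<Rightarrow> real set" where
  "supp_grp G = (\<Union>g\<in>G. supp g)"

definition crs :: "(real \<Rightarrow> real) set \<Rightarrow> real set" where
  "crs G = \<Union>{J \<in> components (supp_grp G). \<forall>g\<in>G. J \<notin> components (supp g)}"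

definition open_interval :: "real set \<Rightarrow> bool" where
  "open_interval J \<longleftrightarrow> open J \<and> is_interval J \<and> J \<noteq> {}"

definition two_chain :: "real set \<Rightarrow> real set \<Rightarrow> bool" where
  "two_chain J1 J2 \<longleftrightarrow> open_interval J1 \<and> open_interval J2 \<and>
     J1 \<inter> J2 \<noteq> {} \<and> J1 \<inter> J2 \<subset> J1 \<and> J1 \<inter> J2 \<subset> J2"

definition zpow :: "(real \<Rightarrow> real) \<Rightarrow> int \<Rightarrow> real \<Rightarrow> real" where
  "zpow g n = (if 0 \<le> n then g ^^ nat n else (inv g) ^^ nat (- n))"

definition crossed_on :: "real set \<Rightarrow> (real \<Rightarrow> real) \<Rightarrow> (real \<Rightarrow> real) \<Rightarrow> bool" where
  "crossed_on U f g \<longleftrightarrow> (\<exists>u\<in>U. \<exists>w\<in>U. \<exists>v\<in>U. u < w \<and> w < v \<and>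
      (\<forall>n::int. zpow g n u < w \<and> w < zpow f n v) \<and>
      (\<exists>N::int. zpow g N v < w \<and> w < zpow f N u))"

definition conradian_on :: "(real \<Rightarrow> real) set \<Rightarrow> real set \<Rightarrow> bool" where
  "conradian_on G U \<longleftrightarrow> (\<forall>f\<in>G. \<forall>g\<in>G. \<not> crossed_on U f g)"

definition invariant_set :: "(real \<Rightarrow> real) set \<Rightarrow> real set \<Rightarrow> bool" where
  "invariant_set G U \<longleftrightarrow> (\<forall>g\<in>G. g ` U = U)"

end

theory Submission
  imports Defs
begin


lemma homeo_G: "homeo_subgroup G \<Longrightarrow> g \<in> G \<Longrightarrow> homeo_plus g"
  by (simp add: homeo_subgroup_def)

lemma supp_open: "homeo_plus g \<Longrightarrow> open (supp g)"
  unfolding supp_def homeo_plus_def by (intro open_Collect_neq) (auto intro: continuous_intros)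

lemma supp_inv: "bij g \<Longrightarrow> supp (inv g) = supp g"
  unfolding supp_def by (metis bij_inv_eq_iff)

lemma supp_comp: "supp (f \<circ> g) \<subseteq> supp f \<union> supp g"
  unfolding supp_def by auto

lemma supp_gen:
  assumes H: "homeo_subgroup G" "S \<subseteq> G" and g: "g \<in> gen_group S"
  shows "supp g \<subseteq> (\<Union>s\<in>S. supp s)"
  using g
proof induction
  case gen_id then show ?case by (simp add: supp_def)
next
  case (gen_gen s) then show ?case by auto
next
  case (gen_inv s)
  then have "bij s" using H homeo_G[of G s] by (auto simp: homeo_plus_def)
  then show ?case using gen_inv supp_inv by auto
next
  case (gen_comp f g) then show ?case using supp_comp by blast
qed

lemma comp_maps:
  assumes h: "strict_mono h" "J \<in> components (supp h)" and y: "y \<in> J"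
  shows "h y \<in> J"
proof -
  have inj: "inj h" using h(1) strict_mono_imp_inj_on by blast
  have hy: "h y \<noteq> y" using y in_components_subset[OF h(2)] by (auto simp: supp_def)
  define S where "S = {min y (h y) .. max y (h y)}"
  have "S \<subseteq> supp h"
  proof
    fix z assume z: "z \<in> S"
    show "z \<in> supp h"
    proof (rule ccontr)
      assume "z \<notin> supp h" then have hz: "h z = z" by (simp add: supp_def)
      have "z = h y"
      proof (cases "y < h y")
        case True
        then have "y \<le> z" "z \<le> h y" using z by (auto simp: S_def)
        then have "h y \<le> h z" using h(1) by (simp add: strict_mono_less_eq)
        then show ?thesis using hz \<open>z \<le> h y\<close> by simp
      next
        case False
        then have "h y \<le> z" "z \<le> y" using z by (auto simp: S_def)
        then have "h z \<le> h y" using h(1) by (simp add: strict_mono_less_eq)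
        then show ?thesis using hz \<open>h y \<le> z\<close> by simp
      qed
      then have "h (h y) = h y" using hz by simp
      then show False using inj hy by (meson injD)
    qed
  qed
  moreover have "connected S" by (simp add: S_def)
  moreover have "J \<inter> S \<noteq> {}" using y by (auto simp: S_def)
  ultimately have "S \<subseteq> J" using components_maximal[OF h(2)] by blast
  then show ?thesis by (auto simp: S_def)
qed



lemma part1:
  assumes H: "homeo_subgroup G" and F: "fin_gen G" and x: "x \<in> crs G"
  shows "\<exists>J1 J2. J1 \<in> (\<Union>g\<in>G. components (supp g)) \<and>
                J2 \<in> (\<Union>g\<in>G. components (supp g)) \<and>
                two_chain J1 J2 \<and> x \<in> J1 \<union> J2"
proof -
  obtain S where S: "finite S" "S \<subseteq> G" "G = gen_group S" using F by (auto simp: fin_gen_def)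
  have sub: "supp_grp G \<subseteq> (\<Union>s\<in>S. supp s)"
    unfolding supp_grp_def using supp_gen[OF H S(2)] S(3) by blast
  obtain J where J: "J \<in> components (supp_grp G)" "x \<in> J" "\<forall>g\<in>G. J \<notin> components (supp g)"
    using x unfolding crs_def by blast
  have JS: "J \<subseteq> supp_grp G" using J(1) in_components_subset by blast
  have op: "\<And>s. s \<in> S \<Longrightarrow> open (supp s)" using S(2) H homeo_G supp_open by blast
  define M where "M = {connected_component_set (supp s) x | s. s \<in> S \<and> x \<in> supp s}"
  have "finite M" unfolding M_def using S(1) by simp
  moreover have "M \<noteq> {}" unfolding M_def using J(2) JS sub by blast
  ultimately obtain I0 where I0: "I0 \<in> M" "\<forall>b\<in>M. I0 \<subseteq> b \<longrightarrow> I0 = b"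
    using finite_has_maximal by blast
  obtain s0 where s0: "s0 \<in> S" "x \<in> supp s0" "I0 = connected_component_set (supp s0) x"
    using I0(1) unfolding M_def by blast
  have I0c: "I0 \<in> components (supp s0)" using s0 componentsI by blast
  have xI0: "x \<in> I0" using s0 by simp
  have oI0: "open I0" using open_components[OF op[OF s0(1)] I0c] .
  have "supp s0 \<subseteq> supp_grp G" unfolding supp_grp_def using s0(1) S(2) by blast
  then have I0J: "I0 \<subseteq> J"
    using components_maximal[OF J(1) in_components_connected[OF I0c]] in_components_subset[OF I0c] xI0 J(2)
    by blast
  have I0neJ: "I0 \<noteq> J" using J(3) I0c s0(1) S(2) by blast
  obtain b where b: "b \<in> J" "b \<in> closure I0" "b \<notin> I0"
  proof (rule ccontr)
    assume "\<not> thesis"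
    then have "J \<inter> closure I0 \<subseteq> I0" using that by blast
    then have e: "I0 = J \<inter> closure I0" using I0J closure_subset by blast
    have "closedin (top_of_set J) I0" unfolding closedin_closed using e by blast
    moreover have "openin (top_of_set J) I0" unfolding openin_open using oI0 I0J by blast
    ultimately have "I0 = {} \<or> I0 = J" using in_components_connected[OF J(1)] connected_clopen by blast
    then show False using xI0 I0neJ by blast
  qed
  obtain s1 where s1: "s1 \<in> S" "b \<in> supp s1" using b(1) JS sub by blast
  define I1 where "I1 = connected_component_set (supp s1) b"
  have I1c: "I1 \<in> components (supp s1)" using s1 componentsI I1_def by blast
  have bI1: "b \<in> I1" using s1 I1_def by simp
  have oI1: "open I1" using open_components[OF op[OF s1(1)] I1c] .
  have "I1 \<inter> closure I0 \<noteq> {}" using bI1 b by blast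
  then have int: "I1 \<inter> I0 \<noteq> {}" using open_Int_closure_eq_empty[OF oI1] by blast
  have n1: "\<not> I0 \<subseteq> I1"
  proof
    assume "I0 \<subseteq> I1"
    then have "x \<in> I1" using xI0 by blast
    then have "I1 = connected_component_set (supp s1) x"
      unfolding I1_def using connected_component_eq by metis
    then have "I1 \<in> M" unfolding M_def using s1(1) \<open>x \<in> I1\<close> I1_def
      by (metis (mono_tags, lifting) connected_component_in mem_Collect_eq)
    then have "I0 = I1" using I0(2) \<open>I0 \<subseteq> I1\<close> by blast
    then show False using bI1 b(3) by blast
  qed
  have oi: "\<And>I s. I \<in> components (supp s) \<Longrightarrow> open I \<Longrightarrow> open_interval I"
    unfolding open_interval_def
    using in_components_connected in_components_nonempty is_interval_connected_1 by blast
  have "two_chain I0 I1"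
    unfolding two_chain_def using oi[OF I0c oI0] oi[OF I1c oI1] int n1 bI1 b(3) by blast
  moreover have "I0 \<in> (\<Union>g\<in>G. components (supp g))" using I0c s0(1) S(2) by blast
  moreover have "I1 \<in> (\<Union>g\<in>G. components (supp g))" using I1c s1(1) S(2) by blast
  ultimately show ?thesis using xI0 by blast
qed



definition PJ :: "real set \<Rightarrow> (real \<Rightarrow> real) \<Rightarrow> bool" where
  "PJ J h \<longleftrightarrow> strict_mono h \<and> h ` J \<subseteq> J \<and> h ` (-J) \<subseteq> -J"

lemma PJ_of:
  assumes H: "homeo_subgroup G" and g: "g \<in> G" and J: "J \<in> components (supp g)"
  shows "PJ J g" "PJ J (inv g)"
proof -
  have hg: "homeo_plus g" using H g homeo_G by blast
  have hi: "homeo_plus (inv g)" using H g homeo_G by (auto simp: homeo_subgroup_def)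
  have bij: "bij g" using hg by (simp add: homeo_plus_def)
  have sm: "strict_mono g" "strict_mono (inv g)" using hg hi by (auto simp: homeo_plus_def)
  have Ji: "J \<in> components (supp (inv g))" using J supp_inv[OF bij] by simp
  have a: "g ` J \<subseteq> J" using comp_maps[OF sm(1) J] by blast
  have b: "inv g ` J \<subseteq> J" using comp_maps[OF sm(2) Ji] by blast
  have c: "g ` (-J) \<subseteq> -J"
  proof
    fix y assume "y \<in> g ` (-J)"
    then obtain z where z: "z \<notin> J" "y = g z" by auto
    show "y \<in> -J"
    proof
      assume "y \<in> J"
      then have "inv g y \<in> J" using b by blast
      moreover have "inv g y = z" using z bij by (simp add: bij_is_inj)
      ultimately show False using z by simp
    qed
  qed
  have d: "inv g ` (-J) \<subseteq> -J"
  proof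
    fix y assume "y \<in> inv g ` (-J)"
    then obtain z where z: "z \<notin> J" "y = inv g z" by auto
    show "y \<in> -J"
    proof
      assume "y \<in> J"
      then have "g y \<in> J" using a by blast
      moreover have "g y = z" using z bij by (simp add: bij_is_surj surj_f_inv_f)
      ultimately show False using z by simp
    qed
  qed
  show "PJ J g" "PJ J (inv g)" unfolding PJ_def using sm a b c d by auto
qed

lemma PJ_comp: "PJ J f \<Longrightarrow> PJ J g \<Longrightarrow> PJ J (f \<circ> g)"
  unfolding PJ_def
proof (intro conjI)
  assume a: "strict_mono f \<and> f ` J \<subseteq> J \<and> f ` (- J) \<subseteq> - J"
     and b: "strict_mono g \<and> g ` J \<subseteq> J \<and> g ` (- J) \<subseteq> - J"
  show "strict_mono (f \<circ> g)" using a b unfolding strict_mono_def by simp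
  show "(f \<circ> g) ` J \<subseteq> J" using a b unfolding image_comp[symmetric] by blast
  show "(f \<circ> g) ` (-J) \<subseteq> -J" using a b unfolding image_comp[symmetric] by blast
qed

lemma PJ_id: "PJ J id"
  unfolding PJ_def strict_mono_def by simp

lemma PJ_funpow: "PJ J h \<Longrightarrow> PJ J (h ^^ n)"
proof (induction n)
  case 0 then show ?case using PJ_id by (simp add: id_def)
next
  case (Suc n)
  then have "PJ J (h \<circ> h ^^ n)" using PJ_comp[of J h "h ^^ n"] by simp
  then show ?case by (simp only: funpow.simps)
qed

lemma PJ_zpow: "PJ J g \<Longrightarrow> PJ J (inv g) \<Longrightarrow> PJ J (zpow g n)"
  unfolding zpow_def by (simp add: PJ_funpow)

lemma funpow_in: "h ` J \<subseteq> J \<Longrightarrow> y \<in> J \<Longrightarrow> (h ^^ n) y \<in> J"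
  by (induction n) auto

lemma orbit_mono_up:
  assumes "h ` J \<subseteq> J" "\<forall>z\<in>J. z < h z" "y \<in> J"
  shows "incseq (\<lambda>n. (h ^^ n) y)"
proof (rule incseq_SucI)
  fix n
  have "(h ^^ n) y \<in> J" using funpow_in[OF assms(1) assms(3)] by blast
  then show "(h ^^ n) y \<le> (h ^^ Suc n) y" using assms(2) by (simp add: less_imp_le)
qed

lemma orbit_mono_down:
  assumes "h ` J \<subseteq> J" "\<forall>z\<in>J. h z < z" "y \<in> J"
  shows "decseq (\<lambda>n. (h ^^ n) y)"
proof (rule decseq_SucI)
  fix n
  have "(h ^^ n) y \<in> J" using funpow_in[OF assms(1) assms(3)] by blast
  then show "(h ^^ Suc n) y \<le> (h ^^ n) y" using assms(2) by (simp add: less_imp_le)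
qed

lemma orbit_up:
  fixes h :: "real \<Rightarrow> real"
  assumes c: "continuous_on UNIV h" and iv: "is_interval J" and m: "h ` J \<subseteq> J"
    and up: "\<forall>z\<in>J. z < h z" and y: "y \<in> J" and t: "t \<in> J"
  shows "\<exists>n. t < (h ^^ n) y"
proof (rule ccontr)
  assume "\<not> ?thesis"
  then have bd: "\<And>n. (h ^^ n) y \<le> t" by (meson not_less)
  define s where "s = (\<lambda>n. (h ^^ n) y)"
  have inc: "incseq s" unfolding s_def using orbit_mono_up[OF m up y] .
  have ba: "bdd_above (range s)" unfolding s_def by (rule bdd_aboveI[where M=t]) (use bd in auto)
  define L where "L = (SUP i. s i)"
  have lim: "s \<longlonglongrightarrow> L" unfolding L_def using LIMSEQ_incseq_SUP[OF ba inc] .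
  have "s 0 \<le> L" using inc lim by (simp add: incseq_le)
  moreover have "L \<le> t" using lim bd unfolding s_def by (simp add: LIMSEQ_le_const2)
  ultimately have LJ: "L \<in> J" using iv y t unfolding is_interval_1 s_def by (metis funpow_0)
  have "(\<lambda>n. h (s n)) \<longlonglongrightarrow> h L"
    using continuous_on_tendsto_compose[OF c lim] by simp
  moreover have "(\<lambda>n. h (s n)) = (\<lambda>n. s (Suc n))" unfolding s_def by auto
  ultimately have "(\<lambda>n. s (Suc n)) \<longlonglongrightarrow> h L" by simp
  then have "h L = L" using LIMSEQ_Suc[OF lim] LIMSEQ_unique by blast
  then show False using up LJ by (metis less_irrefl)
qed

lemma orbit_down:
  fixes h :: "real \<Rightarrow> real"
  assumes c: "continuous_on UNIV h" and iv: "is_interval J" and m: "h ` J \<subseteq> J"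
    and dn: "\<forall>z\<in>J. h z < z" and y: "y \<in> J" and t: "t \<in> J"
  shows "\<exists>n. (h ^^ n) y < t"
proof (rule ccontr)
  assume "\<not> ?thesis"
  then have bd: "\<And>n. t \<le> (h ^^ n) y" by (meson not_less)
  define s where "s = (\<lambda>n. (h ^^ n) y)"
  have dec: "decseq s" unfolding s_def using orbit_mono_down[OF m dn y] .
  have ba: "bdd_below (range s)" unfolding s_def by (rule bdd_belowI[where m=t]) (use bd in auto)
  define L where "L = (INF i. s i)"
  have lim: "s \<longlonglongrightarrow> L" unfolding L_def using LIMSEQ_decseq_INF[OF ba dec] .
  have "L \<le> s 0" using dec lim by (simp add: decseq_ge)
  moreover have "t \<le> L" using lim bd unfolding s_def by (simp add: LIMSEQ_le_const)
  ultimately have LJ: "L \<in> J" using iv y t unfolding is_interval_1 s_def by (metis funpow_0)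
  have "(\<lambda>n. h (s n)) \<longlonglongrightarrow> h L"
    using continuous_on_tendsto_compose[OF c lim] by simp
  moreover have "(\<lambda>n. h (s n)) = (\<lambda>n. s (Suc n))" unfolding s_def by auto
  ultimately have "(\<lambda>n. s (Suc n)) \<longlonglongrightarrow> h L" by simp
  then have "h L = L" using LIMSEQ_Suc[OF lim] LIMSEQ_unique by blast
  then show False using dn LJ by (metis less_irrefl)
qed



lemma U_funpow: "invariant_set G U \<Longrightarrow> h \<in> G \<Longrightarrow> y \<in> U \<Longrightarrow> (h ^^ n) y \<in> U"
  by (induction n) (auto simp: invariant_set_def)

lemma zpow_nat: "zpow f (int n) = f ^^ n"
  by (simp add: zpow_def)

lemma core:
  assumes H: "homeo_subgroup G" and Ui: "invariant_set G U"
    and fG: "f \<in> G" and gG: "g \<in> G"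
    and J1: "J1 \<in> components (supp f)" and J2: "J2 \<in> components (supp g)"
    and fup: "\<forall>z\<in>J1. z < f z" and gdn: "\<forall>z\<in>J2. g z < z"
    and p1: "p1 \<in> J1" "p1 \<notin> J2" and q: "q \<in> J1" "q \<in> J2" and p2: "p2 \<in> J2" "p2 \<notin> J1"
    and o: "p1 < q" "q < p2"
    and x: "x \<in> U" "x \<in> J1 \<union> J2"
  shows "crossed_on U f g"
proof -
  have fiG: "inv f \<in> G" and giG: "inv g \<in> G" using H fG gG by (auto simp: homeo_subgroup_def)
  have hf: "homeo_plus f" "homeo_plus (inv f)" "homeo_plus g" "homeo_plus (inv g)"
    using H fG gG fiG giG homeo_G by blast+
  have cf: "continuous_on UNIV f" "continuous_on UNIV (inv f)"
       "continuous_on UNIV g" "continuous_on UNIV (inv g)"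
    using hf by (auto simp: homeo_plus_def)
  have bf: "bij f" "bij g" using hf by (auto simp: homeo_plus_def)
  have iv1: "is_interval J1" using J1 in_components_connected is_interval_connected_1 by blast
  have iv2: "is_interval J2" using J2 in_components_connected is_interval_connected_1 by blast
  have P1: "PJ J1 f" "PJ J1 (inv f)" using PJ_of[OF H fG J1] .
  have P2: "PJ J2 g" "PJ J2 (inv g)" using PJ_of[OF H gG J2] .
  have m1: "f ` J1 \<subseteq> J1" "inv f ` J1 \<subseteq> J1" using P1 by (auto simp: PJ_def)
  have m2: "g ` J2 \<subseteq> J2" "inv g ` J2 \<subseteq> J2" using P2 by (auto simp: PJ_def)
  have fidn: "\<forall>z\<in>J1. inv f z < z"
  proof
    fix z assume z: "z \<in> J1"
    then have "inv f z \<in> J1" using m1 by blast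
    then have "inv f z < f (inv f z)" using fup by blast
    then show "inv f z < z" using bf by (simp add: bij_is_surj surj_f_inv_f)
  qed
  have giup: "\<forall>z\<in>J2. z < inv g z"
  proof
    fix z assume z: "z \<in> J2"
    then have "inv g z \<in> J2" using m2 by blast
    then have "g (inv g z) < inv g z" using gdn by blast
    then show "z < inv g z" using bf by (simp add: bij_is_surj surj_f_inv_f)
  qed
  have R1: "z \<in> J2" if "z \<in> J1" "q < z" for z
  proof (rule ccontr)
    assume nz: "z \<notin> J2"
    have "p2 < z"
    proof (rule ccontr)
      assume "\<not> p2 < z"
      then have "z \<in> J2" using iv2 q(2) p2(1) that(2) unfolding is_interval_1 by (meson not_less less_imp_le)
      then show False using nz by blast
    qed
    then have "p2 \<in> J1" using iv1 q(1) that(1) o(2) unfolding is_interval_1 by (meson less_imp_le)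
    then show False using p2 by blast
  qed
  have R2: "z \<in> J1" if "z \<in> J2" "z < q" for z
  proof (rule ccontr)
    assume nz: "z \<notin> J1"
    have "z < p1"
    proof (rule ccontr)
      assume "\<not> z < p1"
      then have "z \<in> J1" using iv1 q(1) p1(1) that(2) unfolding is_interval_1 by (meson not_less less_imp_le)
      then show False using nz by blast
    qed
    then have "p1 \<in> J2" using iv2 q(2) that(1) o(1) unfolding is_interval_1 by (meson less_imp_le)
    then show False using p1 by blast
  qed
  obtain w where w: "w \<in> U" "w \<in> J1" "w \<in> J2"
  proof (cases "x \<in> J1")
    case True
    obtain n where n: "q < (f ^^ n) x" using orbit_up[OF cf(1) iv1 m1(1) fup True q(1)] by blast
    have "(f ^^ n) x \<in> J1" using funpow_in[OF m1(1) True] .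
    moreover have "(f ^^ n) x \<in> U" using U_funpow[OF Ui fG x(1)] .
    ultimately show ?thesis using that R1 n by blast
  next
    case False
    then have xJ2: "x \<in> J2" using x(2) by blast
    obtain n where n: "(g ^^ n) x < q" using orbit_down[OF cf(3) iv2 m2(1) gdn xJ2 q(2)] by blast
    have "(g ^^ n) x \<in> J2" using funpow_in[OF m2(1) xJ2] .
    moreover have "(g ^^ n) x \<in> U" using U_funpow[OF Ui gG x(1)] .
    ultimately show ?thesis using that R2 n by blast
  qed
  obtain n where n: "((inv f) ^^ n) w < p1" using orbit_down[OF cf(2) iv1 m1(2) fidn w(2) p1(1)] by blast
  define u where "u = ((inv f) ^^ n) w"
  have u: "u \<in> U" "u \<in> J1" "u < p1"
    using U_funpow[OF Ui fiG w(1)] funpow_in[OF m1(2) w(2)] n unfolding u_def by auto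
  have uJ2: "u \<notin> J2"
  proof
    assume "u \<in> J2"
    then have "p1 \<in> J2" using iv2 q(2) u(3) o(1) unfolding is_interval_1 by (meson less_imp_le)
    then show False using p1 by blast
  qed
  obtain k where k: "p2 < ((inv g) ^^ k) w" using orbit_up[OF cf(4) iv2 m2(2) giup w(3) p2(1)] by blast
  define v where "v = ((inv g) ^^ k) w"
  have v: "v \<in> U" "v \<in> J2" "p2 < v"
    using U_funpow[OF Ui giG w(1)] funpow_in[OF m2(2) w(3)] k unfolding v_def by auto
  have vJ1: "v \<notin> J1"
  proof
    assume "v \<in> J1"
    then have "p2 \<in> J1" using iv1 q(1) v(3) o(2) unfolding is_interval_1 by (meson less_imp_le)
    then show False using p2 by blast
  qed
  have uq: "u < q" using u(3) o(1) by simp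
  have qv: "q < v" using v(3) o(2) by simp
  have A: "zpow g i u < w" for i
  proof -
    have Ph: "PJ J2 (zpow g i)" using PJ_zpow[OF P2] .
    then have sm: "strict_mono (zpow g i)" and "zpow g i q \<in> J2" "zpow g i u \<notin> J2"
      using q(2) uJ2 unfolding PJ_def by auto
    moreover have "zpow g i u < zpow g i q" using sm uq by (simp add: strict_mono_less)
    ultimately show ?thesis using iv2 w(3) unfolding is_interval_1 by (meson not_less less_imp_le)
  qed
  have B: "w < zpow f i v" for i
  proof -
    have Ph: "PJ J1 (zpow f i)" using PJ_zpow[OF P1] .
    then have sm: "strict_mono (zpow f i)" and "zpow f i q \<in> J1" "zpow f i v \<notin> J1"
      using q(1) vJ1 unfolding PJ_def by auto
    moreover have "zpow f i q < zpow f i v" using sm qv by (simp add: strict_mono_less)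
    ultimately show ?thesis using iv1 w(2) unfolding is_interval_1 by (meson not_less less_imp_le)
  qed
  have uw: "u < w" using A[of 0] by (simp add: zpow_def)
  have wv: "w < v" using B[of 0] by (simp add: zpow_def)
  obtain n1 where n1: "w < (f ^^ n1) u" using orbit_up[OF cf(1) iv1 m1(1) fup u(2) w(2)] by blast
  obtain n2 where n2: "(g ^^ n2) v < w" using orbit_down[OF cf(3) iv2 m2(1) gdn v(2) w(3)] by blast
  define N where "N = max n1 n2"
  have "(f ^^ n1) u \<le> (f ^^ N) u"
    using orbit_mono_up[OF m1(1) fup u(2)] unfolding N_def by (metis incseqD max.cobounded1)
  then have C1: "w < zpow f (int N) u" using n1 by (simp add: zpow_nat)
  have "(g ^^ N) v \<le> (g ^^ n2) v"
    using orbit_mono_down[OF m2(1) gdn v(2)] unfolding N_def by (metis decseqD max.cobounded2)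
  then have C2: "zpow g (int N) v < w" using n2 by (simp add: zpow_nat)
  show ?thesis unfolding crossed_on_def
    using u(1) w(1) v(1) uw wv A B C1 C2 by blast
qed



lemma sign_const:
  assumes H: "homeo_subgroup G" and fG: "f \<in> G" and J: "J \<in> components (supp f)"
  shows "(\<forall>z\<in>J. z < f z) \<or> (\<forall>z\<in>J. f z < z)"
proof (rule ccontr)
  assume "\<not> ?thesis"
  then obtain a b where ab: "a \<in> J" "b \<in> J" "\<not> a < f a" "\<not> f b < b" by blast
  have JS: "J \<subseteq> supp f" using J in_components_subset by blast
  have ne: "\<And>z. z \<in> J \<Longrightarrow> f z \<noteq> z" using JS by (auto simp: supp_def)
  have "continuous_on UNIV f" using H fG homeo_G by (auto simp: homeo_plus_def)
  then have "continuous_on J (\<lambda>z. f z - z)"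
    by (intro continuous_intros) (auto intro: continuous_on_subset)
  then have "connected ((\<lambda>z. f z - z) ` J)"
    using connected_continuous_image J in_components_connected by blast
  then have iv: "is_interval ((\<lambda>z. f z - z) ` J)" using is_interval_connected_1 by blast
  have "f a - a < 0" using ab(1,3) ne[of a] by simp
  moreover have "0 < f b - b" using ab(2,4) ne[of b] by simp
  ultimately have "0 \<in> (\<lambda>z. f z - z) ` J"
    using iv ab(1,2) unfolding is_interval_1 by (meson imageI less_imp_le)
  then show False using ne by auto
qed

lemma sign_choose:
  assumes H: "homeo_subgroup G" and fG: "f \<in> G" and J: "J \<in> components (supp f)"
  shows "\<exists>f'\<in>G. J \<in> components (supp f') \<and> (\<forall>z\<in>J. z < f' z)"
    and "\<exists>f'\<in>G. J \<in> components (supp f') \<and> (\<forall>z\<in>J. f' z < z)"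
proof -
  have fiG: "inv f \<in> G" using H fG by (auto simp: homeo_subgroup_def)
  have bf: "bij f" using H fG homeo_G by (auto simp: homeo_plus_def)
  have Ji: "J \<in> components (supp (inv f))" using J supp_inv[OF bf] by simp
  have P: "PJ J f" "PJ J (inv f)" using PJ_of[OF H fG J] .
  have m: "inv f ` J \<subseteq> J" using P by (auto simp: PJ_def)
  have s1: "\<forall>z\<in>J. z < inv f z" if "\<forall>z\<in>J. f z < z"
  proof
    fix z assume "z \<in> J"
    then have "inv f z \<in> J" using m by blast
    then have "f (inv f z) < inv f z" using that by blast
    then show "z < inv f z" using bf by (simp add: bij_is_surj surj_f_inv_f)
  qed
  have s2: "\<forall>z\<in>J. inv f z < z" if "\<forall>z\<in>J. z < f z"
  proof
    fix z assume "z \<in> J"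
    then have "inv f z \<in> J" using m by blast
    then have "inv f z < f (inv f z)" using that by blast
    then show "inv f z < z" using bf by (simp add: bij_is_surj surj_f_inv_f)
  qed
  show "\<exists>f'\<in>G. J \<in> components (supp f') \<and> (\<forall>z\<in>J. z < f' z)"
    using sign_const[OF H fG J] s1 fG fiG J Ji by blast
  show "\<exists>f'\<in>G. J \<in> components (supp f') \<and> (\<forall>z\<in>J. f' z < z)"
    using sign_const[OF H fG J] s2 fG fiG J Ji by blast
qed

lemma part2:
  assumes H: "homeo_subgroup G" and F: "fin_gen G"
    and Ui: "invariant_set G U" and C: "conradian_on G U"
  shows "U \<inter> crs G = {}"
proof (rule ccontr)
  assume "U \<inter> crs G \<noteq> {}"
  then obtain x where x: "x \<in> U" "x \<in> crs G" by blast
  obtain J1 J2 where JJ: "J1 \<in> (\<Union>g\<in>G. components (supp g))" "J2 \<in> (\<Union>g\<in>G. components (supp g))"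
      "two_chain J1 J2" "x \<in> J1 \<union> J2"
    using part1[OF H F x(2)] by blast
  obtain f g where fg: "f \<in> G" "g \<in> G" "J1 \<in> components (supp f)" "J2 \<in> components (supp g)"
    using JJ(1,2) by blast
  have iv1: "is_interval J1" using fg(3) in_components_connected is_interval_connected_1 by blast
  have iv2: "is_interval J2" using fg(4) in_components_connected is_interval_connected_1 by blast
  obtain q where q: "q \<in> J1" "q \<in> J2" using JJ(3) unfolding two_chain_def by blast
  obtain p1 where p1: "p1 \<in> J1" "p1 \<notin> J2" using JJ(3) unfolding two_chain_def by blast
  obtain p2 where p2: "p2 \<in> J2" "p2 \<notin> J1" using JJ(3) unfolding two_chain_def by blast
  have nc: "\<not> crossed_on U a b" if "a \<in> G" "b \<in> G" for a b
    using C that unfolding conradian_on_def by blast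
  have "p1 \<noteq> q" "p2 \<noteq> q" using p1 p2 q by auto
  then consider "p1 < q" "q < p2" | "p2 < q" "q < p1" | "p1 < q" "p2 < q" | "q < p1" "q < p2"
    by linarith
  then show False
  proof cases
    case 1
    obtain f' where f': "f' \<in> G" "J1 \<in> components (supp f')" "\<forall>z\<in>J1. z < f' z"
      using sign_choose(1)[OF H fg(1) fg(3)] by blast
    obtain g' where g': "g' \<in> G" "J2 \<in> components (supp g')" "\<forall>z\<in>J2. g' z < z"
      using sign_choose(2)[OF H fg(2) fg(4)] by blast
    have "crossed_on U f' g'"
      using core[OF H Ui f'(1) g'(1) f'(2) g'(2) f'(3) g'(3) p1 q p2 1 x(1) JJ(4)] .
    then show False using nc f'(1) g'(1) by blast
  next
    case 2
    obtain f' where f': "f' \<in> G" "J2 \<in> components (supp f')" "\<forall>z\<in>J2. z < f' z"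
      using sign_choose(1)[OF H fg(2) fg(4)] by blast
    obtain g' where g': "g' \<in> G" "J1 \<in> components (supp g')" "\<forall>z\<in>J1. g' z < z"
      using sign_choose(2)[OF H fg(1) fg(3)] by blast
    have x2: "x \<in> J2 \<union> J1" using JJ(4) by blast
    have "crossed_on U f' g'"
      using core[OF H Ui f'(1) g'(1) f'(2) g'(2) f'(3) g'(3) p2 q(2) q(1) p1 2 x(1) x2] .
    then show False using nc f'(1) g'(1) by blast
  next
    case 3
    show False
    proof (cases "p1 < p2")
      case True
      then have "p2 \<in> J1" using iv1 p1(1) q(1) 3 unfolding is_interval_1 by (meson less_imp_le)
      then show False using p2 by blast
    next
      case False
      then have "p1 \<in> J2" using iv2 p2(1) q(2) 3 unfolding is_interval_1 by (meson not_less less_imp_le)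
      then show False using p1 by blast
    qed
  next
    case 4
    show False
    proof (cases "p1 < p2")
      case True
      then have "p1 \<in> J2" using iv2 p2(1) q(2) 4 unfolding is_interval_1 by (meson less_imp_le)
      then show False using p1 by blast
    next
      case False
      then have "p2 \<in> J1" using iv1 p1(1) q(1) 4 unfolding is_interval_1 by (meson not_less less_imp_le)
      then show False using p2 by blast
    qed
  qed
qed

theorem lemma2p9:
  fixes G :: "(real \<Rightarrow> real) set"
  assumes "homeo_subgroup G" and "fin_gen G"
  shows "(\<forall>x\<in>crs G. \<exists>J1 J2. J1 \<in> (\<Union>g\<in>G. components (supp g)) \<and>
                            J2 \<in> (\<Union>g\<in>G. components (supp g)) \<and>
                            two_chain J1 J2 \<and> x \<in> J1 \<union> J2)
       \<and> (\<forall>U. invariant_set G U \<and> conradian_on G U \<longrightarrow> U \<inter> crs G = {})"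
  using part1[OF assms] part2[OF assms] by blast

end
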